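(* Let $q$ be a prime power, let $r,m>1$ be integers, $n=rm$, and let $k$ be a positive integer with $k\le m$. Let $V_1\in\mathcal{G}_q(m,k)$, let $\Phi:\mathbb{F}_{q^m}\to\mathbb{F}_{q^n}$ be an injective $\mathbb{F}_q$-linear map and put $V_2=\Phi(\mathbb{F}_{q^m})\in\mathcal{G}_q(n,m)$. Let $\mathcal{C}_2=\mathrm{Orb}_{\mathbb{F}_{q^n}^*}(V_2)$ and $\mathcal{C}_1=\mathrm{Orb}_{\mathbb{F}_{q^m}^*}(V_1)$. If $\mathcal{C}_2$ is full-length and $d(\mathcal{C}_2)>2(m-k)$, then the one-orbit code $\mathcal{C}_2\odot V_1:=\mathrm{Orb}_{\mathbb{F}_{q^n}^*}(\Phi(V_1))\subseteq\mathcal{G}_q(n,k)$ is full-length, and the multi-orbit code $\mathcal{C}_2\odot\mathcal{C}_1:=\bigcup_{\alpha\in\mathbb{F}_{q^m}^*}\mathrm{Orb}_{\mathbb{F}_{q^n}^*}(\Phi(\alpha V_1))\subseteq\mathcal{G}_q(n,k)$ is full-length.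
   Context: For positive integers $k\le N$, $\mathcal{G}_q(N,k)$ denotes the set of $k$-dimensional $\mathbb{F}_q$-subspaces of $\mathbb{F}_{q^N}$ (viewed as an $N$-dimensional $\mathbb{F}_q$-vector space). The subspace distance is $d(U,V)=\dim_{\mathbb{F}_q}(U+V)-\dim_{\mathbb{F}_q}(U\cap V)$, and for a code $\mathcal{C}$ (set of subspaces) $d(\mathcal{C})=\min\{d(U,V):U,V\in\mathcal{C},U\neq V\}$. For $V\in\mathcal{G}_q(N,k)$, $\mathrm{Orb}_{\mathbb{F}_{q^N}^*}(V)=\{\beta V:\beta\in\mathbb{F}_{q^N}^*\}$. A one-orbit code $\mathrm{Orb}_{\mathbb{F}_{q^N}^*}(V)$ is called full-length if $\{\beta\in\mathbb{F}_{q^N}^*:\beta V=V\}=\mathbb{F}_q^*$; a union of orbits $\bigcup_i \mathrm{Orb}(V_i)$ is called full-length if every $\mathrm{Orb}(V_i)$ is full-length. *)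

theory Defs
  imports Main "HOL.Vector_Spaces"
begin

text \<open>F_q is modelled by a finite field type 'f; an extension field F_{q^N} by a finite
field type 'b together with a field embedding of 'f into 'b.\<close>

definition field_emb :: "('f::field \<Rightarrow> 'b::field) \<Rightarrow> bool" where
  "field_emb \<iota> \<longleftrightarrow> \<iota> 1 = 1 \<and> (\<forall>a b. \<iota> (a + b) = \<iota> a + \<iota> b) \<and> (\<forall>a b. \<iota> (a * b) = \<iota> a * \<iota> b)"

definition fscale :: "('f::field \<Rightarrow> 'b::field) \<Rightarrow> 'f \<Rightarrow> 'b \<Rightarrow> 'b" where
  "fscale \<iota> c x = \<iota> c * x"

definition sdim :: "('f::field \<Rightarrow> 'b::field) \<Rightarrow> 'b set \<Rightarrow> nat" where
  "sdim \<iota> U = vector_space.dim (fscale \<iota>) U"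

definition Grass :: "('f::field \<Rightarrow> 'b::field) \<Rightarrow> nat \<Rightarrow> 'b set set" where
  "Grass \<iota> k = {U. module.subspace (fscale \<iota>) U \<and> sdim \<iota> U = k}"

definition set_plus :: "'b::plus set \<Rightarrow> 'b set \<Rightarrow> 'b set" where
  "set_plus U V = {u + v | u v. u \<in> U \<and> v \<in> V}"

definition sdist :: "('f::field \<Rightarrow> 'b::field) \<Rightarrow> 'b set \<Rightarrow> 'b set \<Rightarrow> nat" where
  "sdist \<iota> U V = sdim \<iota> (set_plus U V) - sdim \<iota> (U \<inter> V)"

definition code_dist :: "('f::field \<Rightarrow> 'b::field) \<Rightarrow> 'b set set \<Rightarrow> nat" where
  "code_dist \<iota> C = Min {sdist \<iota> U V | U V. U \<in> C \<and> V \<in> C \<and> U \<noteq> V}"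

definition orb :: "'b::field set \<Rightarrow> 'b set set" where
  "orb V = {(\<lambda>x. \<beta> * x) ` V | \<beta>. \<beta> \<noteq> 0}"

definition stab :: "'b::field set \<Rightarrow> 'b set" where
  "stab V = {\<beta>. \<beta> \<noteq> 0 \<and> (\<lambda>x. \<beta> * x) ` V = V}"

text \<open>The one-orbit code Orb(V) is full-length iff its stabilizer is exactly F_q^*.\<close>
definition full_length :: "('f::field \<Rightarrow> 'b::field) \<Rightarrow> 'b set \<Rightarrow> bool" where
  "full_length \<iota> V \<longleftrightarrow> stab V = \<iota> ` (UNIV - {0})"

end

theory Submission
  imports Defs "HOL-Library.FuncSet"
begin


lemma emb_vs: "field_emb \<iota> \<Longrightarrow> vector_space (fscale \<iota>)"
  unfolding vector_space_def field_emb_def fscale_def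
  by (auto simp: algebra_simps)

lemma emb_zero: "field_emb \<iota> \<Longrightarrow> \<iota> 0 = 0"
  unfolding field_emb_def by (metis add_cancel_right_right add_0)

lemma emb_nz: assumes "field_emb \<iota>" "c \<noteq> 0" shows "\<iota> c \<noteq> 0"
proof
  assume "\<iota> c = 0"
  hence "\<iota> (c * inverse c) = 0" using assms(1) unfolding field_emb_def by simp
  thus False using assms unfolding field_emb_def by simp
qed

lemma emb_fdvs:
  fixes \<iota> :: "'f::field \<Rightarrow> 'b::{field,finite}"
  assumes "field_emb \<iota>"
  shows "\<exists>B. finite_dimensional_vector_space (fscale \<iota>) B"
proof -
  interpret vector_space "fscale \<iota>" by (rule emb_vs[OF assms])
  obtain B where B: "independent B" "UNIV \<subseteq> span B" using basis_exists[of UNIV] by metis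
  have "finite_dimensional_vector_space (fscale \<iota>) B"
    by unfold_locales (use B in auto)
  thus ?thesis by blast
qed

lemma dim_le:
  fixes \<iota> :: "'f::{field,finite} \<Rightarrow> 'a::{field,finite}"
  assumes "field_emb \<iota>" "card (UNIV::'f set) = q" "card (UNIV::'a set) = q ^ m"
  shows "sdim \<iota> UNIV \<le> m"
proof -
  interpret vector_space "fscale \<iota>" by (rule emb_vs[OF assms(1)])
  obtain B where B: "independent B" "UNIV \<subseteq> span B" "card B = dim UNIV" using basis_exists[of UNIV] by metis
  have fin: "finite B" by simp
  define g where "g h = (\<Sum>v\<in>B. fscale \<iota> (h v) v)" for h
  have inj: "inj_on g (PiE B (\<lambda>_. UNIV))"
  proof (rule inj_onI)
    fix h1 h2 assume h: "h1 \<in> PiE B (\<lambda>_. UNIV)" "h2 \<in> PiE B (\<lambda>_. UNIV)" "g h1 = g h2"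
    have "(\<Sum>v\<in>B. fscale \<iota> (h1 v - h2 v) v) = 0"
      using h(3) unfolding g_def by (simp add: scale_left_diff_distrib sum_subtractf)
    note S = this
    have "\<forall>v\<in>B. h1 v - h2 v = 0"
    proof (rule ccontr)
      assume "\<not> (\<forall>v\<in>B. h1 v - h2 v = 0)"
      hence "dependent B" using S
        by (intro dependent_finite[OF fin, THEN iffD2] exI[of _ "\<lambda>v. h1 v - h2 v"]) auto
      thus False using B(1) by simp
    qed
    thus "h1 = h2" using h(1,2) by (auto intro: PiE_ext)
  qed
  have "card (PiE B (\<lambda>_. UNIV::'f set)) = q ^ card B"
    using card_PiE[OF fin, of "\<lambda>_. UNIV::'f set"] assms(2) by simp
  moreover have "card (PiE B (\<lambda>_. UNIV::'f set)) \<le> card (UNIV::'a set)"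
    using card_inj_on_le[OF inj] by simp
  ultimately have "q ^ card B \<le> q ^ m" using assms(3) by simp
  moreover have "q > 1"
  proof -
    have "{0::'f, 1} \<subseteq> UNIV" by simp
    hence "card {0::'f,1} \<le> q" using assms(2) by (metis card_mono finite)
    thus ?thesis by simp
  qed
  ultimately have "card B \<le> m" by simp
  thus ?thesis using B(3) unfolding sdim_def by simp
qed

lemma linear_mult:
  assumes "field_emb \<iota>"
  shows "Vector_Spaces.linear (fscale \<iota>) (fscale \<iota>) (\<lambda>x. \<beta> * x)"
  using emb_vs[OF assms] unfolding linear_iff fscale_def by (simp add: algebra_simps)

lemma image_grass:
  fixes \<iota>1 :: "'f::field \<Rightarrow> 'a::{field,finite}" and \<iota>2 :: "'f \<Rightarrow> 'b::{field,finite}"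
  assumes e1: "field_emb \<iota>1" and e2: "field_emb \<iota>2"
    and lin: "Vector_Spaces.linear (fscale \<iota>1) (fscale \<iota>2) g" and inj: "inj g"
    and V: "V \<in> Grass \<iota>1 k"
  shows "g ` V \<in> Grass \<iota>2 k"
proof -
  obtain B1 where "finite_dimensional_vector_space (fscale \<iota>1) B1" using emb_fdvs[OF e1] by blast
  then interpret finite_dimensional_vector_space_pair_1 "fscale \<iota>1" B1 "fscale \<iota>2"
    using emb_vs[OF e2] by (simp add: finite_dimensional_vector_space_pair_1_def)
  interpret lf: Vector_Spaces.linear "fscale \<iota>1" "fscale \<iota>2" g by (rule lin)
  have "vs2.subspace (g ` V)" using V lf.subspace_image unfolding Grass_def by blast
  moreover have "vs2.dim (g ` V) = vs1.dim V"
    by (rule dim_image_eq[OF lin]) (use inj in \<open>auto intro: inj_on_subset\<close>)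
  ultimately show ?thesis using V unfolding Grass_def sdim_def by simp
qed

lemma full_len:
  fixes \<iota>1 :: "'f::{field,finite} \<Rightarrow> 'a::{field,finite}"
    and \<iota>2 :: "'f \<Rightarrow> 'b::{field,finite}"
    and \<Phi> :: "'a \<Rightarrow> 'b"
  assumes q: "card (UNIV :: 'f set) = q"
    and e1: "field_emb \<iota>1" and e2: "field_emb \<iota>2"
    and qm: "card (UNIV :: 'a set) = q ^ m"
    and V: "V \<in> Grass \<iota>1 k"
    and lin: "Vector_Spaces.linear (fscale \<iota>1) (fscale \<iota>2) \<Phi>" and inj: "inj \<Phi>"
    and fl: "full_length \<iota>2 (\<Phi> ` UNIV)"
    and cd: "code_dist \<iota>2 (orb (\<Phi> ` UNIV)) > 2 * (m - k)"
  shows "full_length \<iota>2 (\<Phi> ` V)"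
proof -
  interpret lf: Vector_Spaces.linear "fscale \<iota>1" "fscale \<iota>2" \<Phi> by (rule lin)
  have Vsub: "lf.vs1.subspace V" using V unfolding Grass_def by simp
  have comm: "\<iota>2 c * \<Phi> x = \<Phi> (\<iota>1 c * x)" for c x
    using lf.scale[of c x] unfolding fscale_def by simp
  have inv2: "\<iota>2 c * \<iota>2 (inverse c) = 1" if "c \<noteq> 0" for c
    using e2 that unfolding field_emb_def by (metis right_inverse)
  have sup: "\<iota>2 ` (UNIV - {0}) \<subseteq> stab (\<Phi> ` V)"
  proof
    fix \<beta> assume "\<beta> \<in> \<iota>2 ` (UNIV - {0})"
    then obtain c where c: "c \<noteq> 0" "\<beta> = \<iota>2 c" by auto
    have Vc: "\<iota>1 d * x \<in> V" if "x \<in> V" for d x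
      using lf.vs1.subspace_scale[OF Vsub that, of d] unfolding fscale_def .
    have "(\<lambda>x. \<beta> * x) ` \<Phi> ` V \<subseteq> \<Phi> ` V" using c comm Vc by auto
    moreover have "\<Phi> ` V \<subseteq> (\<lambda>x. \<beta> * x) ` \<Phi> ` V"
    proof
      fix y assume "y \<in> \<Phi> ` V"
      then obtain x where x: "x \<in> V" "y = \<Phi> x" by auto
      have "y = \<beta> * \<Phi> (\<iota>1 (inverse c) * x)"
        using x c comm[of "inverse c" x, symmetric] inv2[OF c(1)] by (simp add: mult.assoc[symmetric])
      thus "y \<in> (\<lambda>x. \<beta> * x) ` \<Phi> ` V" using Vc[OF x(1)] by blast
    qed
    ultimately show "\<beta> \<in> stab (\<Phi> ` V)" unfolding stab_def using emb_nz[OF e2 c(1)] c by auto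
  qed
  have sub: "stab (\<Phi> ` V) \<subseteq> \<iota>2 ` (UNIV - {0})"
  proof
    fix \<beta> assume b: "\<beta> \<in> stab (\<Phi> ` V)"
    show "\<beta> \<in> \<iota>2 ` (UNIV - {0})"
    proof (rule ccontr)
      assume nb: "\<beta> \<notin> \<iota>2 ` (UNIV - {0})"
      have b0: "\<beta> \<noteq> 0" and bV: "(\<lambda>x. \<beta> * x) ` \<Phi> ` V = \<Phi> ` V" using b unfolding stab_def by auto
      define S where "S = \<Phi> ` UNIV"
      define W where "W = (\<lambda>x. \<beta> * x) ` S"
      have SW: "S \<noteq> W"
      proof
        assume "S = W"
        hence "\<beta> \<in> stab S" using b0 unfolding stab_def W_def by auto
        thus False using fl nb unfolding full_length_def S_def by simp
      qed
      have Sorb: "S \<in> orb S" unfolding orb_def by (rule CollectI, rule exI[of _ 1]) simp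
      have Worb: "W \<in> orb S" unfolding orb_def W_def using b0 by blast
      have fin: "finite {sdist \<iota>2 U V | U V. U \<in> orb S \<and> V \<in> orb S \<and> U \<noteq> V}"
        by (rule finite_subset[of _ "(\<lambda>(U,V). sdist \<iota>2 U V) ` (UNIV \<times> UNIV)"]) auto
      have "code_dist \<iota>2 (orb S) \<le> sdist \<iota>2 S W"
        unfolding code_dist_def by (rule Min_le[OF fin]) (use Sorb Worb SW in blast)
      hence big: "sdist \<iota>2 S W > 2 * (m - k)" using cd unfolding S_def by simp
      define D where "D = sdim \<iota>1 (UNIV::'a set)"
      have Dm: "D \<le> m" using dim_le[OF e1 q qm] unfolding D_def .
      have UG: "(UNIV::'a set) \<in> Grass \<iota>1 D" unfolding Grass_def D_def using lf.vs1.subspace_UNIV by simp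
      have SG: "S \<in> Grass \<iota>2 D" unfolding S_def by (rule image_grass[OF e1 e2 lin inj UG])
      have lin2: "Vector_Spaces.linear (fscale \<iota>1) (fscale \<iota>2) ((\<lambda>x. \<beta> * x) \<circ> \<Phi>)"
        by (rule Vector_Spaces.linear_compose[OF lin linear_mult[OF e2]])
      have inj2: "inj ((\<lambda>x. \<beta> * x) \<circ> \<Phi>)" using inj b0 by (auto simp: inj_def)
      have WG: "W \<in> Grass \<iota>2 D" unfolding W_def S_def image_comp
        by (rule image_grass[OF e1 e2 lin2 inj2 UG])
      have VG: "\<Phi> ` V \<in> Grass \<iota>2 k" by (rule image_grass[OF e1 e2 lin inj V])
      obtain B2 where "finite_dimensional_vector_space (fscale \<iota>2) B2" using emb_fdvs[OF e2] by blast
      then interpret fd: finite_dimensional_vector_space "fscale \<iota>2" B2 .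
      have sums: "lf.vs2.dim (set_plus S W) + lf.vs2.dim (S \<inter> W) = lf.vs2.dim S + lf.vs2.dim W"
        unfolding set_plus_def by (rule fd.dim_sums_Int) (use SG WG in \<open>auto simp: Grass_def\<close>)
      have "\<Phi> ` V \<subseteq> W"
      proof -
        have "(\<lambda>x. \<beta> * x) ` \<Phi> ` V \<subseteq> W" unfolding W_def S_def by (intro image_mono) auto
        thus ?thesis using bV by simp
      qed
      hence "\<Phi> ` V \<subseteq> S \<inter> W" unfolding S_def by auto
      hence "lf.vs2.dim (\<Phi> ` V) \<le> lf.vs2.dim (S \<inter> W)" by (rule fd.dim_subset)
      hence "k \<le> lf.vs2.dim (S \<inter> W)" using VG unfolding Grass_def sdim_def by simp
      moreover have "lf.vs2.dim S = D" "lf.vs2.dim W = D" using SG WG unfolding Grass_def sdim_def by auto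
      ultimately have "sdist \<iota>2 S W \<le> 2 * (m - k)" using sums Dm unfolding sdist_def sdim_def by linarith
      thus False using big by simp
    qed
  qed
  show ?thesis unfolding full_length_def using sup sub by blast
qed


theorem proposition2p6:
  fixes \<iota>1 :: "'f::{field,finite} \<Rightarrow> 'a::{field,finite}"
    and \<iota>2 :: "'f \<Rightarrow> 'b::{field,finite}"
    and \<Phi> :: "'a \<Rightarrow> 'b"
    and q r m n k :: nat
    and V1 :: "'a set"
  assumes "card (UNIV :: 'f set) = q"
    and "field_emb \<iota>1" and "field_emb \<iota>2"
    and "card (UNIV :: 'a set) = q ^ m" and "card (UNIV :: 'b set) = q ^ n"
    and "r > 1" and "m > 1" and "n = r * m"
    and "0 < k" and "k \<le> m"
    and "V1 \<in> Grass \<iota>1 k"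
    and "Vector_Spaces.linear (fscale \<iota>1) (fscale \<iota>2) \<Phi>" and "inj \<Phi>"
    and "full_length \<iota>2 (\<Phi> ` UNIV)"
    and "code_dist \<iota>2 (orb (\<Phi> ` UNIV)) > 2 * (m - k)"
  shows "orb (\<Phi> ` V1) \<subseteq> Grass \<iota>2 k \<and> full_length \<iota>2 (\<Phi> ` V1)
    \<and> (\<forall>\<alpha>::'a. \<alpha> \<noteq> 0 \<longrightarrow>
          orb (\<Phi> ` ((\<lambda>x. \<alpha> * x) ` V1)) \<subseteq> Grass \<iota>2 k
        \<and> full_length \<iota>2 (\<Phi> ` ((\<lambda>x. \<alpha> * x) ` V1)))"
  proof -
  have G: "orb (\<Phi> ` W) \<subseteq> Grass \<iota>2 k \<and> full_length \<iota>2 (\<Phi> ` W)" if W: "W \<in> Grass \<iota>1 k" for W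
  proof
    show "full_length \<iota>2 (\<Phi> ` W)"
      by (rule full_len[OF assms(1,2,3,4) W assms(12,13,14,15)])
    show "orb (\<Phi> ` W) \<subseteq> Grass \<iota>2 k"
    proof
      fix U assume "U \<in> orb (\<Phi> ` W)"
      then obtain \<beta> where b: "\<beta> \<noteq> 0" "U = (\<lambda>x. \<beta> * x) ` \<Phi> ` W" unfolding orb_def by auto
      have lin2: "Vector_Spaces.linear (fscale \<iota>1) (fscale \<iota>2) ((\<lambda>x. \<beta> * x) \<circ> \<Phi>)"
        by (rule Vector_Spaces.linear_compose[OF assms(12) linear_mult[OF assms(3)]])
      have inj2: "inj ((\<lambda>x. \<beta> * x) \<circ> \<Phi>)" using assms(13) b(1) by (auto simp: inj_def)
      show "U \<in> Grass \<iota>2 k" unfolding b(2) image_comp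
        by (rule image_grass[OF assms(2,3) lin2 inj2 W])
    qed
  qed
  have A: "(\<lambda>x. \<alpha> * x) ` V1 \<in> Grass \<iota>1 k" if "\<alpha> \<noteq> 0" for \<alpha> :: 'a
    by (rule image_grass[OF assms(2,2) linear_mult[OF assms(2)] _ assms(11)])
      (use that in \<open>auto simp: inj_def\<close>)
  show ?thesis using G[OF assms(11)] G[OF A] by blast
qed

end
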